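(* Let $\mathcal{H}_k$ be a truncated space with orthonormal basis $f_m(z)=(1+b_mz)z^m$, $m\ge0$, where $b_t=0$ for all $t\ge n$; let $U:\mathcal{H}_k\to H^2(\mathbb{D})$ be the unitary with $Uf_m=z^m$ for all $m\ge0$, and let $S_n = UM_zU^*$ be the $n$-shift corresponding to $k$. Let $X$ be a bounded operator on $H^2(\mathbb{D})$. Then $XS_n = S_nX$ if and only if there exists $\varphi=\sum_{m\ge0}\alpha_m z^m \in H^\infty(\mathbb{D})$ such that $X = T_\varphi + N$, where $T_\varphi$ is the analytic Toeplitz operator with symbol $\varphi$ on $H^2(\mathbb{D})$ and $N$ is the operator on $H^2(\mathbb{D})$ whose matrix with respect to $\{z^m\}_{m\ge0}$ has entries \[\langle N z^m, z^j\rangle = \langle \varphi f_m, f_j\rangle_{\mathcal{H}_k} - \alpha_{j-m}\qquad (j,m\ge 0),\] with the convention $\alpha_{l}=0$ for $l<0$. (Explicitly, the columns $m\ge n$ of this matrix vanish, its entries with $j\le m+1$ vanish, and for $0\le m<n$ and $j>n$ the entry equals $(b_m-b_{j-1})\alpha_{j-m-1}$.)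
   Context: Fix $n \ge 1$. $H^2(\mathbb{D})$ is the Hardy space on the open unit disc and $H^\infty(\mathbb{D})$ the bounded analytic functions. A truncated space is a reproducing kernel Hilbert space $\mathcal{H}_k$ of analytic functions on $\mathbb{D}$ (with scalar analytic kernel $k$) such that: $\mathbb{C}[z]\subseteq\mathcal{H}_k$; the multiplication operator $M_z$ is bounded on $\mathcal{H}_k$; and the functions $f_m(z) = (1 + b_m z)z^m$, $m \ge 0$, form an orthonormal basis of $\mathcal{H}_k$, for scalars $\{b_m\}$ with $b_t = 0$ for $t \ge n$. For $\varphi\in H^\infty(\mathbb{D})$, $\varphi f_m\in\mathcal{H}_k$, so the inner products above make sense. *)

theory Defs
  imports "HOL-Complex_Analysis.Complex_Analysis"
begin

text \<open>H^2(D) is identified with the space of square-summable Taylor coefficient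
  sequences; z^m corresponds to the m-th unit sequence.\<close>

definition l2 :: "(nat \<Rightarrow> complex) set" where
  "l2 = {a. summable (\<lambda>m. (cmod (a m))^2)}"

definition l2norm :: "(nat \<Rightarrow> complex) \<Rightarrow> real" where
  "l2norm a = sqrt (\<Sum>m. (cmod (a m))^2)"

definition bounded_op_H2 :: "((nat \<Rightarrow> complex) \<Rightarrow> (nat \<Rightarrow> complex)) \<Rightarrow> bool" where
  "bounded_op_H2 X \<longleftrightarrow>
     (\<forall>a\<in>l2. X a \<in> l2) \<and>
     (\<forall>a\<in>l2. \<forall>c\<in>l2. X (\<lambda>m. a m + c m) = (\<lambda>j. X a j + X c j)) \<and>
     (\<forall>a\<in>l2. \<forall>s::complex. X (\<lambda>m. s * a m) = (\<lambda>j. s * X a j)) \<and>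
     (\<exists>C. \<forall>a\<in>l2. l2norm (X a) \<le> C * l2norm a)"

definition taylor_coeff :: "(complex \<Rightarrow> complex) \<Rightarrow> nat \<Rightarrow> complex" where
  "taylor_coeff \<phi> m = (deriv ^^ m) \<phi> 0 / of_nat (fact m)"

definition H_infty :: "(complex \<Rightarrow> complex) set" where
  "H_infty = {\<phi>. \<phi> holomorphic_on ball 0 1 \<and> bounded (\<phi> ` ball 0 1)}"

definition cauchy_prod :: "(nat \<Rightarrow> complex) \<Rightarrow> (nat \<Rightarrow> complex) \<Rightarrow> nat \<Rightarrow> complex" where
  "cauchy_prod p q i = (\<Sum>k\<le>i. p k * q (i - k))"

definition toeplitz :: "(complex \<Rightarrow> complex) \<Rightarrow> (nat \<Rightarrow> complex) \<Rightarrow> nat \<Rightarrow> complex" where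
  "toeplitz \<phi> a = cauchy_prod (taylor_coeff \<phi>) a"

text \<open>Taylor coefficients of f_m(z) = (1 + b_m z) z^m.\<close>
definition fbasis :: "(nat \<Rightarrow> complex) \<Rightarrow> nat \<Rightarrow> nat \<Rightarrow> complex" where
  "fbasis b m i = (if i = m then 1 else if i = Suc m then b m else 0)"

text \<open>Coordinates of a power series g with respect to the basis {f_m}:
  g = sum c_m f_m  iff  g_0 = c_0 and g_(i+1) = c_(i+1) + b_i c_i.
  This is the unitary U : H_k -> H^2, U f_m = z^m.\<close>
fun coordf :: "(nat \<Rightarrow> complex) \<Rightarrow> (nat \<Rightarrow> complex) \<Rightarrow> nat \<Rightarrow> complex" where
  "coordf b g 0 = g 0"
| "coordf b g (Suc i) = g (Suc i) - b i * coordf b g i"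

definition Hk :: "(nat \<Rightarrow> complex) \<Rightarrow> (nat \<Rightarrow> complex) set" where
  "Hk b = {g. coordf b g \<in> l2}"

definition Hk_inner :: "(nat \<Rightarrow> complex) \<Rightarrow> (nat \<Rightarrow> complex) \<Rightarrow> (nat \<Rightarrow> complex) \<Rightarrow> complex" where
  "Hk_inner b g h = (\<Sum>i. coordf b g i * cnj (coordf b h i))"

text \<open>U^* : H^2 -> H_k, U^* z^m = f_m, i.e. a |-> sum a_m f_m.\<close>
definition Ustar :: "(nat \<Rightarrow> complex) \<Rightarrow> (nat \<Rightarrow> complex) \<Rightarrow> nat \<Rightarrow> complex" where
  "Ustar b a i = (case i of 0 \<Rightarrow> a 0 | Suc j \<Rightarrow> a (Suc j) + b j * a j)"

definition Mz :: "(nat \<Rightarrow> complex) \<Rightarrow> nat \<Rightarrow> complex" where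
  "Mz g i = (case i of 0 \<Rightarrow> 0 | Suc j \<Rightarrow> g j)"

definition nshift :: "(nat \<Rightarrow> complex) \<Rightarrow> (nat \<Rightarrow> complex) \<Rightarrow> nat \<Rightarrow> complex" where
  "nshift b a = coordf b (Mz (Ustar b a))"

definition alpha_ext :: "(complex \<Rightarrow> complex) \<Rightarrow> int \<Rightarrow> complex" where
  "alpha_ext \<phi> l = (if l < 0 then 0 else taylor_coeff \<phi> (nat l))"

definition N_entry :: "(nat \<Rightarrow> complex) \<Rightarrow> (complex \<Rightarrow> complex) \<Rightarrow> nat \<Rightarrow> nat \<Rightarrow> complex" where
  "N_entry b \<phi> j m =
     Hk_inner b (cauchy_prod (taylor_coeff \<phi>) (fbasis b m)) (fbasis b j)
     - alpha_ext \<phi> (int j - int m)"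

definition N_op :: "(nat \<Rightarrow> complex) \<Rightarrow> (complex \<Rightarrow> complex) \<Rightarrow> (nat \<Rightarrow> complex) \<Rightarrow> nat \<Rightarrow> complex" where
  "N_op b \<phi> a j = (\<Sum>m. N_entry b \<phi> j m * a m)"

end

theory Submission
  imports Defs
begin


lemma coordf_Ustar: "coordf b (Ustar b a) = a"
proof
  fix i show "coordf b (Ustar b a) i = a i"
    by (induction i) (auto simp: Ustar_def)
qed

lemma Ustar_coordf: "Ustar b (coordf b g) = g"
  by (rule ext) (auto simp: Ustar_def split: nat.split)

lemma coordf_local: "(\<forall>i\<le>j. g i = h i) \<Longrightarrow> coordf b g j = coordf b h j"
  by (induction j) auto

lemma coordf_sum: "coordf b (\<lambda>i. \<Sum>m\<in>A. F m i) j = (\<Sum>m\<in>A. coordf b (F m) j)"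
  by (induction j) (auto simp: sum_subtractf sum_distrib_left)

lemma coordf_scale: "coordf b (\<lambda>i. c * g i) j = c * coordf b g j"
  by (induction j) (auto simp: algebra_simps)

lemma coordf_add: "coordf b (\<lambda>i. g i + h i) = (\<lambda>j. coordf b g j + coordf b h j)"
proof
  fix j show "coordf b (\<lambda>i. g i + h i) j = coordf b g j + coordf b h j"
    by (induction j) (auto simp: algebra_simps)
qed

lemma coordf_scale': "coordf b (\<lambda>i. c * g i) = (\<lambda>j. c * coordf b g j)"
  using coordf_scale by blast

lemma coordf_zero_below: "(\<forall>i<m. g i = 0) \<Longrightarrow> j < m \<Longrightarrow> coordf b g j = 0"
  by (induction j) auto

lemma coordf_fbasis: "coordf b (fbasis b k) i = (if i = k then 1 else 0)"
  by (induction i) (auto simp: fbasis_def)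

lemma coordf_late: "\<forall>t\<ge>n. b t = 0 \<Longrightarrow> n < i \<Longrightarrow> coordf b g i = g i"
  by (cases i) auto

lemma cauchy_prod_local: "(\<forall>i\<le>j. g i = h i) \<Longrightarrow> cauchy_prod p g j = cauchy_prod p h j"
  unfolding cauchy_prod_def by (intro sum.cong) auto

lemma cauchy_prod_sum:
  "cauchy_prod p (\<lambda>i. \<Sum>m\<in>A. c m * F m i) j = (\<Sum>m\<in>A. c m * cauchy_prod p (F m) j)"
proof -
  have "cauchy_prod p (\<lambda>i. \<Sum>m\<in>A. c m * F m i) j = (\<Sum>k\<le>j. \<Sum>m\<in>A. c m * (p k * F m (j - k)))"
    unfolding cauchy_prod_def by (simp add: sum_distrib_left mult.left_commute)
  also have "\<dots> = (\<Sum>m\<in>A. \<Sum>k\<le>j. c m * (p k * F m (j - k)))" by (rule sum.swap)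
  also have "\<dots> = (\<Sum>m\<in>A. c m * cauchy_prod p (F m) j)"
    unfolding cauchy_prod_def by (simp add: sum_distrib_left)
  finally show ?thesis .
qed

lemma cauchy_prod_Mz: "cauchy_prod p (Mz g) = Mz (cauchy_prod p g)"
proof
  fix i show "cauchy_prod p (Mz g) i = Mz (cauchy_prod p g) i"
  proof (cases i)
    case 0 then show ?thesis by (simp add: cauchy_prod_def Mz_def)
  next
    case (Suc j)
    have "cauchy_prod p (Mz g) (Suc j) = (\<Sum>k\<le>j. p k * Mz g (Suc j - k))"
      by (simp add: cauchy_prod_def Mz_def)
    also have "\<dots> = (\<Sum>k\<le>j. p k * g (j - k))"
      by (intro sum.cong) (auto simp: Mz_def Suc_diff_le)
    finally show ?thesis using Suc by (simp add: Mz_def cauchy_prod_def)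
  qed
qed

lemma Hk_inner_fbasis: "Hk_inner b g (fbasis b j) = coordf b g j"
proof -
  have "(\<lambda>i. coordf b g i * cnj (coordf b (fbasis b j) i)) = (\<lambda>i. if i = j then coordf b g i else 0)"
    by (auto simp: coordf_fbasis)
  then show ?thesis unfolding Hk_inner_def using sums_single[of j "coordf b g"]
    by (simp add: sums_iff)
qed

lemma cauchy_prod_fbasis_below: "i < m \<Longrightarrow> cauchy_prod p (fbasis b m) i = 0"
  unfolding cauchy_prod_def fbasis_def by (intro sum.neutral) auto

lemma N_entry_eq: "N_entry b \<phi> j m =
   coordf b (cauchy_prod (taylor_coeff \<phi>) (fbasis b m)) j - alpha_ext \<phi> (int j - int m)"
  by (simp add: N_entry_def Hk_inner_fbasis)

lemma N_entry_zero: "j < m \<Longrightarrow> N_entry b \<phi> j m = 0"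
  unfolding N_entry_eq
  by (subst coordf_zero_below[of m]) (auto simp: cauchy_prod_fbasis_below alpha_ext_def)

lemma N_op_finite: "N_op b \<phi> a j = (\<Sum>m\<le>j. N_entry b \<phi> j m * a m)"
  unfolding N_op_def by (rule suminf_finite) (auto simp: N_entry_zero)

lemma Ustar_local: "k \<le> j \<Longrightarrow> Ustar b a k = (\<Sum>m\<le>j. a m * fbasis b m k)"
proof -
  assume kj: "k \<le> j"
  have "(\<Sum>m\<le>j. a m * fbasis b m k) = (\<Sum>m\<le>j. (if m = k then a m else 0) + (if Suc m = k then b m * a m else 0))"
    by (intro sum.cong) (auto simp: fbasis_def)
  also have "\<dots> = a k + (\<Sum>m\<le>j. if Suc m = k then b m * a m else 0)"
    using kj by (simp add: sum.distrib)
  also have "\<dots> = Ustar b a k"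
  proof (cases k)
    case 0 then show ?thesis by (simp add: Ustar_def)
  next
    case (Suc k')
    then have "(\<Sum>m\<le>j. if Suc m = k then b m * a m else 0) = (\<Sum>m\<le>j. if m = k' then b m * a m else 0)"
      by (intro sum.cong) auto
    also have "\<dots> = b k' * a k'" using kj Suc by simp
    finally show ?thesis using Suc by (simp add: Ustar_def)
  qed
  finally show ?thesis by simp
qed

lemma flip_sum: "(\<Sum>k\<le>j. f k (j - k)) = (\<Sum>m\<le>(j::nat). f (j - m) m)"
  by (rule sum.reindex_bij_witness[where i="\<lambda>m. j - m" and j="\<lambda>m. j - m"]) auto

lemma main_identity:
  "coordf b (cauchy_prod (taylor_coeff \<phi>) (Ustar b a)) j
     = toeplitz \<phi> a j + N_op b \<phi> a j"
proof -
  let ?p = "taylor_coeff \<phi>"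
  let ?G = "\<lambda>i. \<Sum>m\<le>j. a m * fbasis b m i"
  have "coordf b (cauchy_prod ?p (Ustar b a)) j = coordf b (cauchy_prod ?p ?G) j"
  proof (intro coordf_local allI impI cauchy_prod_local)
    fix i k assume "i \<le> j" "k \<le> i"
    then have "k \<le> j" by simp
    then show "Ustar b a k = ?G k" by (rule Ustar_local)
  qed
  also have "cauchy_prod ?p ?G = (\<lambda>i. \<Sum>m\<le>j. a m * cauchy_prod ?p (fbasis b m) i)"
    by (rule ext, rule cauchy_prod_sum)
  also have "coordf b \<dots> j = (\<Sum>m\<le>j. a m * coordf b (cauchy_prod ?p (fbasis b m)) j)"
    by (simp add: coordf_sum coordf_scale)
  also have "\<dots> = (\<Sum>m\<le>j. N_entry b \<phi> j m * a m + alpha_ext \<phi> (int j - int m) * a m)"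
    by (intro sum.cong refl) (simp add: N_entry_eq algebra_simps)
  also have "\<dots> = (\<Sum>m\<le>j. N_entry b \<phi> j m * a m) + (\<Sum>m\<le>j. alpha_ext \<phi> (int j - int m) * a m)"
    by (rule sum.distrib)
  also have "(\<Sum>m\<le>j. alpha_ext \<phi> (int j - int m) * a m) = (\<Sum>m\<le>j. ?p (j - m) * a m)"
  proof (intro sum.cong refl)
    fix m assume "m \<in> {..j}"
    then have mj: "m \<le> j" by simp
    then have h1: "\<not> (int j - int m < 0)" by linarith
    from mj have h2: "nat (int j - int m) = j - m" by arith
    show "alpha_ext \<phi> (int j - int m) * a m = ?p (j - m) * a m"
      unfolding alpha_ext_def using h1 h2 by (simp only: if_False)
  qed
  also have "\<dots> = toeplitz \<phi> a j"
    unfolding toeplitz_def cauchy_prod_def using flip_sum[of "\<lambda>k m. ?p k * a m" j] by (rule sym)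
  finally show ?thesis unfolding N_op_finite by (simp only: add.commute)
qed



definition S2 :: "(nat \<Rightarrow> complex) \<Rightarrow> real" where
  "S2 a = (\<Sum>i. (cmod (a i))^2)"

lemma l2norm_S2: "l2norm a = sqrt (S2 a)"
  by (simp add: l2norm_def S2_def)

lemma l2_dom:
  assumes "summable f" "\<And>i. (cmod (h i))^2 \<le> f i"
  shows "h \<in> l2" "S2 h \<le> suminf f"
proof -
  have s: "summable (\<lambda>i. (cmod (h i))^2)"
    by (rule summable_comparison_test[OF _ assms(1)]) (use assms(2) in auto)
  then show "h \<in> l2" by (simp add: l2_def)
  show "S2 h \<le> suminf f" unfolding S2_def by (rule suminf_le[OF assms(2) s assms(1)])
qed

lemma l2_summable: "a \<in> l2 \<Longrightarrow> summable (\<lambda>i. (cmod (a i))^2)"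
  by (simp add: l2_def)

lemma S2_nonneg: "a \<in> l2 \<Longrightarrow> 0 \<le> S2 a"
  unfolding S2_def by (rule suminf_nonneg) (auto simp: l2_def)

lemma term_le_S2: "a \<in> l2 \<Longrightarrow> (cmod (a i))^2 \<le> S2 a"
proof -
  assume a: "a \<in> l2"
  have "sum (\<lambda>i. (cmod (a i))^2) {i} \<le> (\<Sum>i. (cmod (a i))^2)"
    by (rule sum_le_suminf) (use a in \<open>auto simp: l2_def\<close>)
  then show ?thesis by (simp add: S2_def)
qed

lemma term_le_sqrt: "a \<in> l2 \<Longrightarrow> cmod (a i) \<le> sqrt (S2 a)"
  using term_le_S2[of a i] real_le_rsqrt by blast

lemma shift_l2: "g \<in> l2 \<Longrightarrow> (\<lambda>i. g (Suc i)) \<in> l2"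
  unfolding l2_def using summable_Suc_iff[of "\<lambda>i. (cmod (g i))^2"] by simp

lemma Mz_l2: "g \<in> l2 \<Longrightarrow> Mz g \<in> l2"
proof -
  assume "g \<in> l2"
  then have "summable (\<lambda>i. (cmod (Mz g (Suc i)))^2)" by (simp add: Mz_def l2_def)
  then show ?thesis unfolding l2_def using summable_Suc_iff by blast
qed

lemma finite_supp_l2:
  assumes "\<And>i. i > N \<Longrightarrow> a i = 0" shows "a \<in> l2"
  unfolding l2_def mem_Collect_eq by (rule summable_finite[of "{..N}"]) (use assms in \<open>auto simp: not_le\<close>)

lemma sq_sum_le: "(x + y)^2 \<le> 2*x^2 + 2*(y::real)^2"
proof -
  have "0 \<le> (x - y)^2" by simp
  then show ?thesis by (simp add: power2_eq_square algebra_simps)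
qed

lemma b_bound:
  fixes b :: "nat \<Rightarrow> complex"
  assumes "\<forall>t\<ge>n. b t = 0"
  shows "cmod (b t) \<le> (\<Sum>s<n. cmod (b s))"
proof (cases "t < n")
  case True then show ?thesis by (intro member_le_sum[where f="\<lambda>s. cmod (b s)"]) auto
next
  case False then show ?thesis using assms by (simp add: sum_nonneg)
qed

lemma Ustar_l2:
  assumes bn: "\<forall>t\<ge>n. b t = 0"
  shows "\<exists>K\<ge>0. \<forall>a\<in>l2. Ustar b a \<in> l2 \<and> S2 (Ustar b a) \<le> K * S2 a"
proof -
  define B where "B = (\<Sum>s<n. cmod (b s))"
  have B0: "0 \<le> B" unfolding B_def by (simp add: sum_nonneg)
  have bB: "cmod (b t) \<le> B" for t unfolding B_def by (rule b_bound[OF bn])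
  show ?thesis
  proof (intro exI[of _ "2 + 4 * B^2"] conjI ballI)
    show "0 \<le> 2 + 4 * B^2" by simp
    fix a assume a: "a \<in> l2"
    define f where "f i = 2 * (cmod (a i))^2 + 2 * B^2 * (cmod (a (i - 1)))^2" for i
    have sa: "summable (\<lambda>i. (cmod (a i))^2)" using a by (simp add: l2_def)
    have sa1: "summable (\<lambda>i. (cmod (a (i - 1)))^2)"
      using summable_Suc_iff[of "\<lambda>i. (cmod (a (i - 1)))^2"] sa by simp
    have sf: "summable f" unfolding f_def
      by (intro summable_add summable_mult sa sa1)
    have pt: "(cmod (Ustar b a i))^2 \<le> f i" for i
    proof (cases i)
      case 0 then show ?thesis by (simp add: Ustar_def f_def)
    next
      case (Suc k)
      have "cmod (Ustar b a i) \<le> cmod (a (Suc k)) + B * cmod (a k)"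
        using Suc norm_triangle_ineq[of "a (Suc k)" "b k * a k"] bB[of k]
        by (simp add: Ustar_def norm_mult) (meson add_left_mono mult_right_mono norm_ge_zero order_trans)
      then have "(cmod (Ustar b a i))^2 \<le> (cmod (a (Suc k)) + B * cmod (a k))^2"
        by (intro power_mono) auto
      also have "\<dots> \<le> 2 * (cmod (a (Suc k)))^2 + 2 * (B * cmod (a k))^2" by (rule sq_sum_le)
      finally show ?thesis using Suc by (simp add: f_def power_mult_distrib)
    qed
    from l2_dom[OF sf pt] have r1: "Ustar b a \<in> l2" and r2: "S2 (Ustar b a) \<le> suminf f" by auto
    have e1: "(\<Sum>i. 2 * (cmod (a i))^2) = 2 * S2 a"
      unfolding S2_def by (rule suminf_mult[OF sa])
    have e2: "(\<Sum>i. 2 * B^2 * (cmod (a (i - 1)))^2) = 2 * B^2 * (\<Sum>i. (cmod (a (i - 1)))^2)"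
      by (rule suminf_mult[OF sa1])
    have "suminf f = (\<Sum>i. 2 * (cmod (a i))^2) + (\<Sum>i. 2 * B^2 * (cmod (a (i - 1)))^2)"
      unfolding f_def by (intro suminf_add[symmetric] summable_mult sa sa1)
    also have "\<dots> = 2 * S2 a + 2 * B^2 * (\<Sum>i. (cmod (a (i - 1)))^2)"
      by (simp only: e1 e2)
    also have "(\<Sum>i. (cmod (a (i - 1)))^2) = (cmod (a 0))^2 + S2 a"
      using suminf_split_head[OF sa1] by (simp add: S2_def)
    finally have sf_eq: "suminf f = 2 * S2 a + 2 * B^2 * ((cmod (a 0))^2 + S2 a)" .
    have c0: "(cmod (a 0))^2 \<le> S2 a" by (rule term_le_S2[OF a])
    have "2 * B^2 * ((cmod (a 0))^2 + S2 a) \<le> 2 * B^2 * (S2 a + S2 a)"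
      by (rule mult_left_mono) (use c0 in auto)
    then have "2 * S2 a + 2 * B^2 * ((cmod (a 0))^2 + S2 a) \<le> 2 * S2 a + 2 * B^2 * (S2 a + S2 a)"
      by linarith
    then show "S2 (Ustar b a) \<le> (2 + 4 * B^2) * S2 a"
      using r2 sf_eq by (simp add: algebra_simps)
    show "Ustar b a \<in> l2" by (rule r1)
  qed
qed

lemma coordf_l2:
  assumes bn: "\<forall>t\<ge>n. b t = 0"
  shows "\<exists>K\<ge>0. \<forall>g\<in>l2. coordf b g \<in> l2 \<and> S2 (coordf b g) \<le> K * S2 g"
proof -
  define B where "B = (\<Sum>s<n. cmod (b s))"
  have B0: "0 \<le> B" unfolding B_def by (simp add: sum_nonneg)
  have bB: "cmod (b t) \<le> B" for t unfolding B_def by (rule b_bound[OF bn])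
  define L where "L = 2 + B"
  have L1: "1 \<le> L" using B0 by (simp add: L_def)
  define K where "K = 1 + real (Suc n) * L^(2*n)"
  show ?thesis
  proof (intro exI[of _ K] conjI ballI)
    show "0 \<le> K" unfolding K_def using L1 by simp
    fix g assume g: "g \<in> l2"
    define s where "s = sqrt (S2 g)"
    have s0: "0 \<le> s" unfolding s_def using S2_nonneg[OF g] by simp
    have gs: "cmod (g k) \<le> s" for k unfolding s_def by (rule term_le_sqrt[OF g])
    have cb: "cmod (coordf b g i) \<le> L^i * s" for i
    proof (induction i)
      case 0 then show ?case using gs[of 0] by simp
    next
      case (Suc i)
      have Li: "1 \<le> L^i" using L1 by (simp add: one_le_power)
      have "cmod (coordf b g (Suc i)) \<le> cmod (g (Suc i)) + cmod (b i) * cmod (coordf b g i)"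
        using norm_triangle_ineq4[of "g (Suc i)" "b i * coordf b g i"] by (simp add: norm_mult)
      also have "\<dots> \<le> s + B * (L^i * s)"
        by (intro add_mono mult_mono gs Suc.IH bB B0) auto
      also have "\<dots> \<le> L^i * s + B * (L^i * s)"
        using Li s0 by (simp add: mult_right_mono[of 1 "L^i" s, simplified])
      also have "\<dots> = (1 + B) * L^i * s" by (simp add: algebra_simps)
      also have "\<dots> \<le> L * L^i * s"
        using s0 Li by (intro mult_right_mono) (auto simp: L_def)
      finally show ?case by simp
    qed
    define f where "f i = (cmod (g i))^2 + (if i \<le> n then L^(2*n) * S2 g else 0)" for i
    have sg: "summable (\<lambda>i. (cmod (g i))^2)" using g by (simp add: l2_def)
    have sfin: "summable (\<lambda>i. if i \<le> n then L^(2*n) * S2 g else 0)"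
      by (rule summable_finite[of "{..n}"]) auto
    have sf: "summable f" unfolding f_def by (intro summable_add sg sfin)
    have pt: "(cmod (coordf b g i))^2 \<le> f i" for i
    proof (cases "i \<le> n")
      case True
      have "cmod (coordf b g i) \<le> L^n * s"
        using cb[of i] power_increasing[OF True L1] s0
        by (meson mult_right_mono order_trans)
      then have "(cmod (coordf b g i))^2 \<le> (L^n * s)^2" by (intro power_mono) auto
      also have "\<dots> = (L^n)^2 * s^2" by (simp add: power_mult_distrib)
      also have "\<dots> = L^(2*n) * S2 g"
        using S2_nonneg[OF g] by (simp add: s_def power_mult[symmetric] mult.commute)
      finally show ?thesis unfolding f_def using True by (simp add: add_increasing)
    next
      case False
      then show ?thesis using coordf_late[OF bn, of i g] by (simp add: f_def)
    qed
    from l2_dom[OF sf pt] have r1: "coordf b g \<in> l2" and r2: "S2 (coordf b g) \<le> suminf f" by auto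
    have "suminf f = (\<Sum>i. (cmod (g i))^2) + (\<Sum>i. if i \<le> n then L^(2*n) * S2 g else 0)"
      unfolding f_def by (intro suminf_add[symmetric] sg sfin)
    also have "(\<Sum>i. (cmod (g i))^2) = S2 g" by (simp add: S2_def)
    also have "(\<Sum>i. if i \<le> n then L^(2*n) * S2 g else 0) = (\<Sum>i\<le>n. if i \<le> n then L^(2*n) * S2 g else 0)"
      by (rule suminf_finite) auto
    also have "\<dots> = (\<Sum>i\<le>n. L^(2*n) * S2 g)" by simp
    also have "S2 g + \<dots> = K * S2 g" by (simp add: K_def algebra_simps)
    finally show "S2 (coordf b g) \<le> K * S2 g" using r2 by simp
    show "coordf b g \<in> l2" by (rule r1)
  qed
qed

lemma nshift_l2:
  assumes bn: "\<forall>t\<ge>n. b t = 0" and a: "a \<in> l2"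
  shows "nshift b a \<in> l2"
  using Ustar_l2[OF bn] coordf_l2[OF bn] Mz_l2 a unfolding nshift_def by blast



lemma Ustar_add: "Ustar b (\<lambda>j. u j + v j) = (\<lambda>i. Ustar b u i + Ustar b v i)"
  by (rule ext) (auto simp: Ustar_def algebra_simps split: nat.split)

lemma Ustar_scale: "Ustar b (\<lambda>j. c * u j) = (\<lambda>i. c * Ustar b u i)"
  by (rule ext) (auto simp: Ustar_def algebra_simps split: nat.split)

lemma backward:
  assumes bn: "\<forall>t\<ge>n. b t = 0"
    and H: "\<forall>a\<in>l2. X a = (\<lambda>j. toeplitz \<phi> a j + N_op b \<phi> a j)"
  shows "\<forall>a\<in>l2. X (nshift b a) = nshift b (X a)"
proof
  fix a assume a: "a \<in> l2"
  let ?p = "taylor_coeff \<phi>"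
  have H': "X c = coordf b (cauchy_prod ?p (Ustar b c))" if "c \<in> l2" for c
    using H that by (auto simp: fun_eq_iff main_identity)
  have "X (nshift b a) = coordf b (cauchy_prod ?p (Ustar b (nshift b a)))"
    by (rule H'[OF nshift_l2[OF bn a]])
  also have "\<dots> = coordf b (Mz (cauchy_prod ?p (Ustar b a)))"
    by (simp add: nshift_def Ustar_coordf cauchy_prod_Mz)
  also have "\<dots> = nshift b (X a)"
    by (simp add: H'[OF a] nshift_def Ustar_coordf)
  finally show "X (nshift b a) = nshift b (X a)" .
qed

lemma S2_bound_from_norm:
  assumes "l2norm (X a) \<le> C * l2norm a" "a \<in> l2" "X a \<in> l2"
  shows "S2 (X a) \<le> C^2 * S2 a"
proof -
  have "(sqrt (S2 (X a)))^2 \<le> (C * sqrt (S2 a))^2"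
    using assms(1) S2_nonneg[OF assms(3)] by (intro power_mono) (auto simp: l2norm_S2)
  also have "\<dots> = C^2 * S2 a" using S2_nonneg[OF assms(2)] by (simp add: power_mult_distrib)
  finally show ?thesis using S2_nonneg[OF assms(3)] by simp
qed

lemma forward_conv:
  assumes bn: "\<forall>t\<ge>n. b t = 0" and bX: "bounded_op_H2 X"
    and comm: "\<forall>a\<in>l2. X (nshift b a) = nshift b (X a)"
  shows "\<exists>\<psi>\<in>l2. \<exists>D>0. (\<forall>g\<in>l2. cauchy_prod \<psi> g \<in> l2 \<and> S2 (cauchy_prod \<psi> g) \<le> D * S2 g)
            \<and> (\<forall>a\<in>l2. X a = coordf b (cauchy_prod \<psi> (Ustar b a)))"
proof -
  have Xl2: "\<And>a. a \<in> l2 \<Longrightarrow> X a \<in> l2" using bX by (simp add: bounded_op_H2_def)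
  have Xadd: "\<And>a c. a \<in> l2 \<Longrightarrow> c \<in> l2 \<Longrightarrow> X (\<lambda>m. a m + c m) = (\<lambda>j. X a j + X c j)"
    using bX by (simp add: bounded_op_H2_def)
  have Xscale: "\<And>a s. a \<in> l2 \<Longrightarrow> X (\<lambda>m. s * a m) = (\<lambda>j. s * X a j)"
    using bX by (simp add: bounded_op_H2_def)
  obtain C where XC: "\<And>a. a \<in> l2 \<Longrightarrow> l2norm (X a) \<le> C * l2norm a"
    using bX unfolding bounded_op_H2_def by blast
  obtain KU where KU: "KU \<ge> 0" "\<And>a. a \<in> l2 \<Longrightarrow> Ustar b a \<in> l2 \<and> S2 (Ustar b a) \<le> KU * S2 a"
    using Ustar_l2[OF bn] by blast
  obtain KC where KC: "KC \<ge> 0" "\<And>g. g \<in> l2 \<Longrightarrow> coordf b g \<in> l2 \<and> S2 (coordf b g) \<le> KC * S2 g"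
    using coordf_l2[OF bn] by blast
  define Y where "Y g = Ustar b (X (coordf b g))" for g
  have Yl2: "Y g \<in> l2" if "g \<in> l2" for g
    unfolding Y_def using that KU KC Xl2 by blast
  have Yadd: "Y (\<lambda>i. g i + h i) = (\<lambda>j. Y g j + Y h j)" if "g \<in> l2" "h \<in> l2" for g h
    unfolding Y_def using that KC by (simp add: coordf_add Xadd Ustar_add)
  have Yscale: "Y (\<lambda>i. c * g i) = (\<lambda>j. c * Y g j)" if "g \<in> l2" for g c
    unfolding Y_def using that KC by (simp add: coordf_scale' Xscale Ustar_scale)
  have Yshift: "Y (Mz g) = Mz (Y g)" if "g \<in> l2" for g
  proof -
    have "coordf b (Mz g) = nshift b (coordf b g)" by (simp add: nshift_def Ustar_coordf)
    then have "X (coordf b (Mz g)) = nshift b (X (coordf b g))"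
      using comm KC that by simp
    then show ?thesis unfolding Y_def by (simp add: nshift_def Ustar_coordf)
  qed
  define e0 :: "nat \<Rightarrow> complex" where "e0 i = (if i = 0 then 1 else 0)" for i
  have e0l2: "e0 \<in> l2" by (rule finite_supp_l2[of 0]) (simp add: e0_def)
  define \<psi> where "\<psi> = Y e0"
  have conv: "Y g j = cauchy_prod \<psi> g j" if "g \<in> l2" for g j
    using that
  proof (induction j arbitrary: g)
    case 0
    have "g 0 * e0 0 + Mz (\<lambda>i. g (Suc i)) 0 = g 0" by (simp add: e0_def Mz_def)
    have dec: "g = (\<lambda>i. g 0 * e0 i + Mz (\<lambda>i. g (Suc i)) i)"
      by (rule ext) (auto simp: e0_def Mz_def split: nat.split)
    have l1: "(\<lambda>i. g 0 * e0 i) \<in> l2" by (rule finite_supp_l2[of 0]) (simp add: e0_def)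
    have l2': "Mz (\<lambda>i. g (Suc i)) \<in> l2" by (intro Mz_l2 shift_l2 0)
    have "Y g 0 = Y (\<lambda>i. g 0 * e0 i) 0 + Y (Mz (\<lambda>i. g (Suc i))) 0"
      by (subst dec) (simp add: Yadd[OF l1 l2'])
    also have "\<dots> = g 0 * \<psi> 0"
      by (simp add: Yscale[OF e0l2] Yshift[OF shift_l2[OF 0]] \<psi>_def Mz_def)
    finally show ?case by (simp add: cauchy_prod_def)
  next
    case (Suc j)
    have dec: "g = (\<lambda>i. g 0 * e0 i + Mz (\<lambda>i. g (Suc i)) i)"
      by (rule ext) (auto simp: e0_def Mz_def split: nat.split)
    have l1: "(\<lambda>i. g 0 * e0 i) \<in> l2" by (rule finite_supp_l2[of 0]) (simp add: e0_def)
    have sl: "(\<lambda>i. g (Suc i)) \<in> l2" by (rule shift_l2[OF Suc.prems])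
    have l2': "Mz (\<lambda>i. g (Suc i)) \<in> l2" by (intro Mz_l2 sl)
    have "Y g (Suc j) = Y (\<lambda>i. g 0 * e0 i) (Suc j) + Y (Mz (\<lambda>i. g (Suc i))) (Suc j)"
      by (subst dec) (simp add: Yadd[OF l1 l2'])
    also have "\<dots> = g 0 * \<psi> (Suc j) + Y (\<lambda>i. g (Suc i)) j"
      by (simp add: Yscale[OF e0l2] Yshift[OF sl] \<psi>_def Mz_def)
    also have "Y (\<lambda>i. g (Suc i)) j = cauchy_prod \<psi> (\<lambda>i. g (Suc i)) j"
      by (rule Suc.IH[OF sl])
    also have "g 0 * \<psi> (Suc j) + \<dots> = cauchy_prod \<psi> g (Suc j)"
    proof -
      have "cauchy_prod \<psi> g (Suc j) = (\<Sum>k\<le>j. \<psi> k * g (Suc j - k)) + \<psi> (Suc j) * g 0"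
        by (simp add: cauchy_prod_def)
      also have "(\<Sum>k\<le>j. \<psi> k * g (Suc j - k)) = cauchy_prod \<psi> (\<lambda>i. g (Suc i)) j"
        unfolding cauchy_prod_def by (intro sum.cong refl) (simp add: Suc_diff_le)
      finally show ?thesis by (simp add: algebra_simps)
    qed
    finally show ?case .
  qed
  have convf: "Y g = cauchy_prod \<psi> g" if "g \<in> l2" for g
    using conv[OF that] by blast
  define D where "D = KU * C^2 * KC + 1"
  have D0: "D > 0" unfolding D_def using KU(1) KC(1) by (simp add: add_nonneg_pos)
  have bound: "cauchy_prod \<psi> g \<in> l2 \<and> S2 (cauchy_prod \<psi> g) \<le> D * S2 g" if g: "g \<in> l2" for g
  proof
    show "cauchy_prod \<psi> g \<in> l2" using Yl2[OF g] convf[OF g] by simp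
    have cg: "coordf b g \<in> l2" and cgb: "S2 (coordf b g) \<le> KC * S2 g" using KC(2)[OF g] by auto
    have xg: "X (coordf b g) \<in> l2" by (rule Xl2[OF cg])
    have "S2 (Y g) \<le> KU * S2 (X (coordf b g))" unfolding Y_def using KU(2)[OF xg] by simp
    also have "\<dots> \<le> KU * (C^2 * S2 (coordf b g))"
      by (intro mult_left_mono S2_bound_from_norm XC cg KU(1) xg)
    also have "\<dots> \<le> KU * (C^2 * (KC * S2 g))"
      by (intro mult_left_mono cgb KU(1)) simp
    also have "\<dots> \<le> D * S2 g"
      unfolding D_def using S2_nonneg[OF g] by (simp add: algebra_simps)
    finally show "S2 (cauchy_prod \<psi> g) \<le> D * S2 g" using convf[OF g] by simp
  qed
  have rep: "X a = coordf b (cauchy_prod \<psi> (Ustar b a))" if a: "a \<in> l2" for a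
  proof -
    have ua: "Ustar b a \<in> l2" using KU(2)[OF a] by simp
    have "X a = coordf b (Y (Ustar b a))" unfolding Y_def by (simp add: coordf_Ustar)
    then show ?thesis using convf[OF ua] by simp
  qed
  show ?thesis
  proof (intro bexI[of _ \<psi>] exI[of _ D] conjI D0 ballI rep)
    show "\<psi> \<in> l2" by (simp add: \<psi>_def Yl2 e0l2)
    fix g assume "g \<in> l2"
    then show "cauchy_prod \<psi> g \<in> l2" "S2 (cauchy_prod \<psi> g) \<le> D * S2 g"
      using bound by auto
  qed
qed



lemma amgm: assumes t: "0 < t" shows "(x::real) * y \<le> (t * x^2 + y^2 / t) / 2"
proof -
  have "0 \<le> (t*x - y)^2" by simp
  then have h: "2*t*(x*y) \<le> t^2*x^2 + y^2" by (simp add: power2_eq_square algebra_simps)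
  have "(t * x^2 + y^2 / t) / 2 = (t^2*x^2 + y^2) / (2*t)" using t by (simp add: field_simps power2_eq_square)
  moreover have "x * y = (2*t*(x*y)) / (2*t)" using t by simp
  ultimately show ?thesis using h t by (metis divide_right_mono less_eq_real_def mult_pos_pos zero_less_numeral)
qed

lemma fps_radius_ge1:
  assumes bd: "\<And>k. cmod (\<psi> k) \<le> M"
  shows "fps_conv_radius (Abs_fps \<psi>) \<ge> 1"
  unfolding fps_conv_radius_def
proof (rule conv_radius_geI_ex')
  fix r :: real assume r: "0 < r" "ereal r < 1"
  then have r1: "r < 1" by simp
  have M0: "0 \<le> M" using bd[of 0] norm_ge_zero order_trans by blast
  show "summable (\<lambda>n. fps_nth (Abs_fps \<psi>) n * of_real r ^ n)"
  proof (rule summable_comparison_test[of _ "\<lambda>n. M * r^n"])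
    show "summable (\<lambda>n. M * r^n)" using r r1 by (intro summable_mult summable_geometric) simp
    show "\<exists>N. \<forall>n\<ge>N. norm (fps_nth (Abs_fps \<psi>) n * complex_of_real r ^ n) \<le> M * r ^ n"
      using r bd by (auto simp: norm_mult norm_power intro!: mult_right_mono)
  qed
qed

lemma analytic:
  assumes psi: "\<psi> \<in> l2" and D0: "D > 0"
    and hyp: "\<forall>g\<in>l2. cauchy_prod \<psi> g \<in> l2 \<and> S2 (cauchy_prod \<psi> g) \<le> D * S2 g"
  shows "\<exists>\<phi>\<in>H_infty. taylor_coeff \<phi> = \<psi>"
proof -
  define M where "M = sqrt (S2 \<psi>)"
  have bd: "cmod (\<psi> k) \<le> M" for k unfolding M_def by (rule term_le_sqrt[OF psi])
  define F where "F = Abs_fps \<psi>"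
  have rad: "fps_conv_radius F \<ge> 1" unfolding F_def by (rule fps_radius_ge1[OF bd])
  define \<phi> where "\<phi> = eval_fps F"
  have hol: "\<phi> holomorphic_on ball 0 1"
    unfolding \<phi>_def
  proof (rule holomorphic_on_eval_fps, rule subsetI)
    fix z :: complex assume "z \<in> ball 0 1"
    then have "ereal (cmod z) < 1" by simp
    then have "ereal (cmod z) < fps_conv_radius F" using rad by (rule order_less_le_trans)
    then show "z \<in> eball 0 (fps_conv_radius F)" by simp
  qed
  have "(0::ereal) < 1" by simp
  then have rad0: "fps_conv_radius F > 0" using rad by (rule order_less_le_trans)
  have tc: "taylor_coeff \<phi> = \<psi>"
  proof
    fix m
    have "fps_nth F m = (deriv ^^ m) \<phi> 0 / fact m"
      unfolding \<phi>_def by (rule fps_nth_fps_expansion[OF eval_fps_has_fps_expansion[OF rad0]])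
    then show "taylor_coeff \<phi> m = \<psi> m" by (simp add: taylor_coeff_def F_def)
  qed
  have main: "cmod (\<phi> z) \<le> sqrt D" if z: "cmod z < 1" for z
  proof -
    define q where "q = (cmod z)^2"
    have q0: "0 \<le> q" and q1: "q < 1" using z by (auto simp: q_def power_less_one_iff abs_square_less_1)
    define k where "k j = (cnj z)^j" for j
    have kq: "(cmod (k j))^2 = q^j" for j
    proof -
      have "(cmod (k j))^2 = ((cmod z)^j)^2" by (simp add: k_def norm_power)
      also have "\<dots> = q^j" unfolding q_def by (metis power_mult mult.commute)
      finally show ?thesis .
    qed
    have sq: "summable (\<lambda>j. q^j)" using q0 q1 by (intro summable_geometric) simp
    have kl2: "k \<in> l2" unfolding l2_def using sq by (simp add: kq)
    have Sk: "S2 k = 1 / (1 - q)" unfolding S2_def kq using q0 q1 by (intro suminf_geometric) simp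
    have Skpos: "S2 k > 0" using Sk q1 by simp
    define h where "h = cauchy_prod \<psi> k"
    have hl2: "h \<in> l2" and hS: "S2 h \<le> D * S2 k" using hyp kl2 by (auto simp: h_def)
    have sA: "summable (\<lambda>i. norm (\<psi> i * z^i))"
    proof (rule summable_comparison_test[of _ "\<lambda>n. M * (cmod z)^n"])
      show "summable (\<lambda>n. M * (cmod z)^n)" using z by (intro summable_mult summable_geometric) simp
      show "\<exists>N. \<forall>n\<ge>N. norm (norm (\<psi> n * z^n)) \<le> M * (cmod z)^n"
        using bd by (auto simp: norm_mult norm_power intro!: mult_right_mono)
    qed
    have nk: "norm (k j * z^j) = q^j" for j
      by (simp add: k_def q_def norm_mult norm_power power_mult_distrib[symmetric] power2_eq_square)
    have sB: "summable (\<lambda>j. norm (k j * z^j))" using sq by (simp add: nk)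
    have "(\<Sum>i. \<psi> i * z^i) * (\<Sum>j. k j * z^j) = (\<Sum>j. \<Sum>i\<le>j. (\<psi> i * z^i) * (k (j - i) * z^(j - i)))"
      by (rule Cauchy_product[OF sA sB])
    also have "\<dots> = (\<Sum>j. h j * z^j)"
    proof (rule suminf_cong)
      fix j
      have "(\<Sum>i\<le>j. (\<psi> i * z^i) * (k (j - i) * z^(j - i))) = (\<Sum>i\<le>j. \<psi> i * k (j - i) * z^j)"
      proof (rule sum.cong[OF refl])
        fix i assume "i \<in> {..j}"
        then have "z^i * z^(j - i) = z^j" by (simp add: power_add[symmetric])
        then show "(\<psi> i * z^i) * (k (j - i) * z^(j - i)) = \<psi> i * k (j - i) * z^j"
          by (metis mult.assoc mult.left_commute)
      qed
      then show "(\<Sum>i\<le>j. (\<psi> i * z^i) * (k (j - i) * z^(j - i))) = h j * z^j"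
        by (simp add: h_def cauchy_prod_def sum_distrib_right)
    qed
    finally have prod: "(\<Sum>i. \<psi> i * z^i) * (\<Sum>j. k j * z^j) = (\<Sum>j. h j * z^j)" .
    have phiz: "(\<Sum>i. \<psi> i * z^i) = \<phi> z" by (simp add: \<phi>_def eval_fps_def F_def)
    have kz: "k j * z^j = of_real (q^j)" for j
    proof -
      have "cnj z * z = of_real q" unfolding q_def using complex_norm_square[of z] by (simp add: mult.commute)
      then show ?thesis by (simp add: k_def power_mult_distrib[symmetric])
    qed
    have "(\<lambda>j. of_real (q^j) :: complex) sums of_real (1 / (1 - q))"
      using geometric_sums[of q] q0 q1 by (subst sums_of_real_iff) simp
    then have sumk: "(\<Sum>j. k j * z^j) = of_real (S2 k)" by (simp add: kz Sk sums_iff)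
    have hk: "norm (h j * z^j) = cmod (h j) * cmod (k j)" for j
      by (simp add: k_def norm_mult norm_power)
    define t where "t = 1 / sqrt D"
    have t0: "t > 0" using D0 by (simp add: t_def)
    have sh: "summable (\<lambda>j. (cmod (h j))^2)" using hl2 by (simp add: l2_def)
    have sk: "summable (\<lambda>j. (cmod (k j))^2)" using kl2 by (simp add: l2_def)
    have sdom: "summable (\<lambda>j. (t * (cmod (h j))^2 + (cmod (k j))^2 / t) / 2)"
      by (intro summable_divide summable_add summable_mult sh sk)
    have pt: "cmod (h j) * cmod (k j) \<le> (t * (cmod (h j))^2 + (cmod (k j))^2 / t) / 2" for j
      by (rule amgm[OF t0])
    have snorm: "summable (\<lambda>j. norm (h j * z^j))"
      unfolding hk by (rule summable_comparison_test[OF _ sdom]) (use pt in auto)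
    have e: "(\<Sum>j. h j * z^j) = \<phi> z * of_real (S2 k)" using prod phiz sumk by simp
    have "cmod (\<phi> z) * S2 k = norm (\<phi> z * of_real (S2 k))" using Skpos by (simp add: norm_mult)
    also have "\<dots> = norm (\<Sum>j. h j * z^j)" by (simp only: e)
    also have "\<dots> \<le> (\<Sum>j. norm (h j * z^j))" by (rule summable_norm[OF snorm])
    also have "\<dots> \<le> (\<Sum>j. (t * (cmod (h j))^2 + (cmod (k j))^2 / t) / 2)"
      unfolding hk using pt by (intro suminf_le[OF _ _ sdom]) (use snorm hk in auto)
    also have "\<dots> = (t * S2 h + S2 k / t) / 2"
    proof -
      have "(\<Sum>j. (t * (cmod (h j))^2 + (cmod (k j))^2 / t) / 2)
            = (\<Sum>j. t * (cmod (h j))^2 + (cmod (k j))^2 / t) / 2"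
        by (rule suminf_divide) (intro summable_add summable_mult summable_divide sh sk)
      also have "(\<Sum>j. t * (cmod (h j))^2 + (cmod (k j))^2 / t) = (\<Sum>j. t * (cmod (h j))^2) + (\<Sum>j. (cmod (k j))^2 / t)"
        by (rule suminf_add[symmetric]) (intro summable_mult summable_divide sh sk)+
      also have "(\<Sum>j. t * (cmod (h j))^2) = t * S2 h" unfolding S2_def by (rule suminf_mult[OF sh])
      also have "(\<Sum>j. (cmod (k j))^2 / t) = S2 k / t" unfolding S2_def by (rule suminf_divide[OF sk])
      finally show ?thesis .
    qed
    also have "\<dots> \<le> (t * (D * S2 k) + S2 k / t) / 2"
      using hS t0 by (intro divide_right_mono add_right_mono mult_left_mono) auto
    also have "\<dots> = sqrt D * S2 k"
    proof -
      have "t * D = sqrt D" using D0 by (simp add: t_def field_simps real_div_sqrt)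
      moreover have "1 / t = sqrt D" by (simp add: t_def)
      ultimately have a1: "t * (D * S2 k) = sqrt D * S2 k" and a2: "S2 k / t = sqrt D * S2 k"
        by (metis mult.assoc, metis times_divide_eq_right mult.commute mult_1_right)
      show ?thesis by (simp only: a1 a2) simp
    qed
    finally have "cmod (\<phi> z) * S2 k \<le> sqrt D * S2 k" .
    then show ?thesis using Skpos by simp
  qed
  have bnd: "bounded (\<phi> ` ball 0 1)"
    unfolding bounded_iff using main by (intro exI[of _ "sqrt D"]) auto
  show ?thesis using hol bnd tc by (intro bexI[of _ \<phi>]) (auto simp: H_infty_def)
qed


theorem theorem4p5:
  fixes n :: nat and b :: "nat \<Rightarrow> complex"
    and X :: "(nat \<Rightarrow> complex) \<Rightarrow> (nat \<Rightarrow> complex)"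
  assumes "n \<ge> 1"
    and "\<forall>t\<ge>n. b t = 0"
    and "bounded_op_H2 X"
  shows "(\<forall>a\<in>l2. X (nshift b a) = nshift b (X a)) \<longleftrightarrow>
         (\<exists>\<phi>\<in>H_infty. \<forall>a\<in>l2. X a = (\<lambda>j. toeplitz \<phi> a j + N_op b \<phi> a j))"
proof
  assume comm: "\<forall>a\<in>l2. X (nshift b a) = nshift b (X a)"
  obtain \<psi> D where psi: "\<psi> \<in> l2" and D0: "D > 0"
    and bnd: "\<forall>g\<in>l2. cauchy_prod \<psi> g \<in> l2 \<and> S2 (cauchy_prod \<psi> g) \<le> D * S2 g"
    and rep: "\<forall>a\<in>l2. X a = coordf b (cauchy_prod \<psi> (Ustar b a))"
    using forward_conv[OF assms(2) assms(3) comm] by blast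
  obtain \<phi> where phi: "\<phi> \<in> H_infty" and tc: "taylor_coeff \<phi> = \<psi>"
    using analytic[OF psi D0 bnd] by blast
  show "\<exists>\<phi>\<in>H_infty. \<forall>a\<in>l2. X a = (\<lambda>j. toeplitz \<phi> a j + N_op b \<phi> a j)"
  proof (intro bexI[OF _ phi] ballI)
    fix a assume a: "a \<in> l2"
    have "X a = coordf b (cauchy_prod (taylor_coeff \<phi>) (Ustar b a))" using rep a tc by simp
    then show "X a = (\<lambda>j. toeplitz \<phi> a j + N_op b \<phi> a j)" by (simp add: fun_eq_iff main_identity)
  qed
next
  assume "\<exists>\<phi>\<in>H_infty. \<forall>a\<in>l2. X a = (\<lambda>j. toeplitz \<phi> a j + N_op b \<phi> a j)"
  then obtain \<phi> where "\<forall>a\<in>l2. X a = (\<lambda>j. toeplitz \<phi> a j + N_op b \<phi> a j)" by blast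
  then show "\<forall>a\<in>l2. X (nshift b a) = nshift b (X a)" by (rule backward[OF assms(2)])
qed

end
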